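(* Let $I$ be the graph formed from two vertex-disjoint copies of the complete graph $K_4$ by adding a single edge joining one vertex of the first copy to one vertex of the second copy. Then $\chi_{td}(I)=8$, $I$ is connected, $I$ has order $8=\chi_{td}(I)$, and $I$ is not saturable.
   Context: For a simple graph $G$ and a positive integer $k$, a proper $k$-total difference labeling (TDL) of $G$ is a function $f: V(G)\to\{1,\dots,k\}$, extended to edges by $f(\{u,v\}) = |f(u)-f(v)|$, such that: (i) adjacent vertices receive different labels; (ii) two distinct edges sharing a vertex receive different labels; (iii) no edge receives the same label as either of its endpoints. $\chi_{td}(G)$ denotes the smallest $k$ for which such a labeling exists. A TDL of a graph $G$ of order $n$ is saturated if $\chi_{td}(G)=n$ and the set of vertex labels used is exactly $\{1,2,\dots,\chi_{td}(G)\}$. $G$ is saturable if it has at least one saturated labeling. *)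

theory Defs
  imports Main
begin

definition simple_graph :: "'a set \<Rightarrow> ('a \<Rightarrow> 'a \<Rightarrow> bool) \<Rightarrow> bool" where
  "simple_graph V E \<longleftrightarrow> finite V \<and> (\<forall>u v. E u v \<longrightarrow> u \<in> V \<and> v \<in> V)
     \<and> (\<forall>u v. E u v \<longrightarrow> E v u) \<and> (\<forall>v. \<not> E v v)"

(* Proper k-total difference labeling: f : V -> {1..k}; the edge {u,v} gets |f u - f v|. *)
definition is_TDL :: "'a set \<Rightarrow> ('a \<Rightarrow> 'a \<Rightarrow> bool) \<Rightarrow> nat \<Rightarrow> ('a \<Rightarrow> int) \<Rightarrow> bool" where
  "is_TDL V E k f \<longleftrightarrow>
     (\<forall>v\<in>V. 1 \<le> f v \<and> f v \<le> int k)
   \<and> (\<forall>u v. E u v \<longrightarrow> f u \<noteq> f v)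
   \<and> (\<forall>u v w. E u v \<and> E u w \<and> v \<noteq> w \<longrightarrow> \<bar>f u - f v\<bar> \<noteq> \<bar>f u - f w\<bar>)
   \<and> (\<forall>u v. E u v \<longrightarrow> \<bar>f u - f v\<bar> \<noteq> f u \<and> \<bar>f u - f v\<bar> \<noteq> f v)"

definition chi_td :: "'a set \<Rightarrow> ('a \<Rightarrow> 'a \<Rightarrow> bool) \<Rightarrow> nat" where
  "chi_td V E = (LEAST k. k > 0 \<and> (\<exists>f. is_TDL V E k f))"

definition saturated_TDL :: "'a set \<Rightarrow> ('a \<Rightarrow> 'a \<Rightarrow> bool) \<Rightarrow> ('a \<Rightarrow> int) \<Rightarrow> bool" where
  "saturated_TDL V E f \<longleftrightarrow> is_TDL V E (chi_td V E) f \<and> chi_td V E = card V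
     \<and> f ` V = {1 .. int (chi_td V E)}"

definition saturable :: "'a set \<Rightarrow> ('a \<Rightarrow> 'a \<Rightarrow> bool) \<Rightarrow> bool" where
  "saturable V E \<longleftrightarrow> (\<exists>f. saturated_TDL V E f)"

definition graph_connected :: "'a set \<Rightarrow> ('a \<Rightarrow> 'a \<Rightarrow> bool) \<Rightarrow> bool" where
  "graph_connected V E \<longleftrightarrow> V \<noteq> {} \<and> (\<forall>u\<in>V. \<forall>v\<in>V. (\<lambda>x y. E x y)\<^sup>*\<^sup>* u v)"

definition I_V :: "nat set" where "I_V = {0..7}"

definition I_E :: "nat \<Rightarrow> nat \<Rightarrow> bool" where
  "I_E u v \<longleftrightarrow> u \<noteq> v \<and>
     ((u \<in> {0..3} \<and> v \<in> {0..3}) \<or> (u \<in> {4..7} \<and> v \<in> {4..7})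
      \<or> (u = 0 \<and> v = 4) \<or> (u = 4 \<and> v = 0))"

end

theory Submission imports Defs begin

definition KS :: "int \<Rightarrow> int \<Rightarrow> int \<Rightarrow> int \<Rightarrow> bool" where
"KS a b c d \<longleftrightarrow> distinct [a,b,c,d] \<and> (\<forall>x\<in>{a,b,c,d}. \<forall>y\<in>{a,b,c,d}. x \<noteq> y \<longrightarrow>
    \<bar>x-y\<bar> \<noteq> x \<and> \<bar>x-y\<bar> \<noteq> y \<and> (\<forall>z\<in>{a,b,c,d}. z \<noteq> x \<and> z \<noteq> y \<longrightarrow> \<bar>x-y\<bar> \<noteq> \<bar>x-z\<bar>))"

definition R :: "int \<Rightarrow> int \<Rightarrow> int \<Rightarrow> int \<Rightarrow> bool" where
"R a b c d \<longleftrightarrow> (KS a b c d \<and> a \<in> {1..8} \<and> b \<in> {1..8} \<and> c \<in> {1..8} \<and> d \<in> {1..8} \<longrightarrow> a=8 \<or> b=8 \<or> c=8 \<or> d=8)"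

lemma sorted7: fixes a b c d :: int
  assumes "1 \<le> a" "a < b" "b < c" "c < d" "d \<le> 7"
  "b-a \<noteq> a" "c-a \<noteq> a" "d-a \<noteq> a" "c-b \<noteq> b" "d-b \<noteq> b" "d-c \<noteq> c"
  "b-a \<noteq> c-b" "b-a \<noteq> d-b" "c-a \<noteq> d-c" "c-b \<noteq> d-c"
  shows False
  using assms by smt

lemma KS_all: assumes "KS a b c d" "x \<in> {a,b,c,d}" "y \<in> {a,b,c,d}" "x \<noteq> y"
  shows "\<bar>x-y\<bar> \<noteq> x \<and> \<bar>x-y\<bar> \<noteq> y \<and> (\<forall>z\<in>{a,b,c,d}. z \<noteq> x \<and> z \<noteq> y \<longrightarrow> \<bar>x-y\<bar> \<noteq> \<bar>x-z\<bar>)"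
proof -
  from assms(1) have H: "\<forall>x\<in>{a,b,c,d}. \<forall>y\<in>{a,b,c,d}. x \<noteq> y \<longrightarrow>
    \<bar>x-y\<bar> \<noteq> x \<and> \<bar>x-y\<bar> \<noteq> y \<and> (\<forall>z\<in>{a,b,c,d}. z \<noteq> x \<and> z \<noteq> y \<longrightarrow> \<bar>x-y\<bar> \<noteq> \<bar>x-z\<bar>)"
    unfolding KS_def by (rule conjunct2)
  show ?thesis using mp[OF bspec[OF bspec[OF H assms(2)] assms(3)] assms(4)] .
qed

lemma KS_E2: assumes "KS a b c d" "x \<in> {a,b,c,d}" "y \<in> {a,b,c,d}" "x \<noteq> y"
  shows "\<bar>x-y\<bar> \<noteq> y"
  using KS_all[OF assms] by (rule conjunct1[OF conjunct2])

lemma KS_V: assumes "KS a b c d" "x \<in> {a,b,c,d}" "y \<in> {a,b,c,d}" "z \<in> {a,b,c,d}" "x \<noteq> y" "z \<noteq> x" "z \<noteq> y"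
  shows "\<bar>x-y\<bar> \<noteq> \<bar>x-z\<bar>"
proof -
  have "\<forall>z\<in>{a,b,c,d}. z \<noteq> x \<and> z \<noteq> y \<longrightarrow> \<bar>x-y\<bar> \<noteq> \<bar>x-z\<bar>"
    using KS_all[OF assms(1,2,3,5)] by blast
  then show ?thesis using assms(4,6,7) by blast
qed

lemma S4: assumes o: "a < b" "b < c" "c < d" shows "R a b c d"
  unfolding R_def
proof (intro impI)
  assume h: "KS a b c d \<and> a \<in> {1..8} \<and> b \<in> {1..8} \<and> c \<in> {1..8} \<and> d \<in> {1..8}"
  then have k: "KS a b c d" by blast
  show "a=8 \<or> b=8 \<or> c=8 \<or> d=8"
  proof (rule ccontr)
    assume n: "\<not> (a=8 \<or> b=8 \<or> c=8 \<or> d=8)"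
    have e2: "\<bar>b-a\<bar> \<noteq> a" "\<bar>c-a\<bar> \<noteq> a" "\<bar>d-a\<bar> \<noteq> a" "\<bar>c-b\<bar> \<noteq> b" "\<bar>d-b\<bar> \<noteq> b" "\<bar>d-c\<bar> \<noteq> c"
      using KS_E2[OF k, of b a] KS_E2[OF k, of c a] KS_E2[OF k, of d a] KS_E2[OF k, of c b]
        KS_E2[OF k, of d b] KS_E2[OF k, of d c] o by auto
    have e3: "\<bar>b-a\<bar> \<noteq> \<bar>b-c\<bar>" "\<bar>b-a\<bar> \<noteq> \<bar>b-d\<bar>" "\<bar>c-a\<bar> \<noteq> \<bar>c-d\<bar>" "\<bar>c-b\<bar> \<noteq> \<bar>c-d\<bar>"
      using KS_V[OF k, of b a c] KS_V[OF k, of b a d] KS_V[OF k, of c a d] KS_V[OF k, of c b d] o by auto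
    have "1 \<le> a" "d \<le> 7" using h n by auto
    have ab: "\<bar>b-a\<bar> = b-a" "\<bar>c-a\<bar> = c-a" "\<bar>d-a\<bar> = d-a" "\<bar>c-b\<bar> = c-b" "\<bar>d-b\<bar> = d-b"
      "\<bar>b-c\<bar> = c-b" "\<bar>b-d\<bar> = d-b" "\<bar>c-d\<bar> = d-c" "\<bar>d-c\<bar> = d-c" using o by auto
    have "b-a \<noteq> a" "c-a \<noteq> a" "d-a \<noteq> a" "c-b \<noteq> b" "d-b \<noteq> b" "d-c \<noteq> c"
      "b-a \<noteq> c-b" "b-a \<noteq> d-b" "c-a \<noteq> d-c" "c-b \<noteq> d-c" using e2 e3 unfolding ab by auto
    note ne = this
    show False using sorted7[OF \<open>1 \<le> a\<close> o \<open>d \<le> 7\<close> ne] .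
  qed
qed

lemma Rsw1: "R a b c d \<Longrightarrow> R b a c d" unfolding R_def KS_def by (simp add: insert_commute) blast
lemma Rsw2: "R a b c d \<Longrightarrow> R a c b d" unfolding R_def KS_def by (simp add: insert_commute) blast
lemma Rsw3: "R a b c d \<Longrightarrow> R a b d c" unfolding R_def KS_def by (simp add: insert_commute) blast

lemma S3: "b < c \<Longrightarrow> c < d \<Longrightarrow> a \<noteq> b \<Longrightarrow> a \<noteq> c \<Longrightarrow> a \<noteq> d \<Longrightarrow> R a b c d"
proof -
  assume h: "b < c" "c < d" "a \<noteq> b" "a \<noteq> c" "a \<noteq> d"
  consider "a < b" | "b < a \<and> a < c" | "c < a \<and> a < d" | "d < a" using h by linarith
  then show ?thesis
  proof cases
    case 1 then show ?thesis using h S4 by blast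
  next
    case 2 then show ?thesis using h S4[of b a c d] Rsw1 by blast
  next
    case 3 then show ?thesis using h S4[of b c a d] Rsw1 Rsw2 by blast
  next
    case 4 then show ?thesis using h S4[of b c d a] Rsw1 Rsw2 Rsw3 by blast
  qed
qed

lemma S2: "c < d \<Longrightarrow> a \<noteq> b \<Longrightarrow> a \<noteq> c \<Longrightarrow> a \<noteq> d \<Longrightarrow> b \<noteq> c \<Longrightarrow> b \<noteq> d \<Longrightarrow> R a b c d"
proof -
  assume h: "c < d" "a \<noteq> b" "a \<noteq> c" "a \<noteq> d" "b \<noteq> c" "b \<noteq> d"
  consider "b < c" | "c < b \<and> b < d" | "d < b" using h by linarith
  then show ?thesis
  proof cases
    case 1 then show ?thesis using h S3 by blast
  next
    case 2 then show ?thesis using h S3[of c b d a] Rsw2 by blast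
  next
    case 3 then show ?thesis using h S3[of c d b a] Rsw2 Rsw3 by blast
  qed
qed

lemma S1: "a \<noteq> b \<Longrightarrow> a \<noteq> c \<Longrightarrow> a \<noteq> d \<Longrightarrow> b \<noteq> c \<Longrightarrow> b \<noteq> d \<Longrightarrow> c \<noteq> d \<Longrightarrow> R a b c d"
  using S2[of c d a b] S2[of d c a b] Rsw3 by (metis linorder_neqE)

lemma KS_8: "KS a b c d \<Longrightarrow> a \<in> {1..8} \<Longrightarrow> b \<in> {1..8} \<Longrightarrow> c \<in> {1..8} \<Longrightarrow> d \<in> {1..8} \<Longrightarrow> a=8 \<or> b=8 \<or> c=8 \<or> d=8"
proof -
  assume k: "KS a b c d" "a \<in> {1..8}" "b \<in> {1..8}" "c \<in> {1..8}" "d \<in> {1..8}"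
  then have "distinct [a,b,c,d]" unfolding KS_def by blast
  then have "a \<noteq> b" "a \<noteq> c" "a \<noteq> d" "b \<noteq> c" "b \<noteq> d" "c \<noteq> d" by auto
  then have "R a b c d" by (rule S1)
  then show ?thesis using k unfolding R_def by blast
qed

lemma TDL_KS:
  assumes T: "is_TDL V E k f" and cl: "\<And>u v. u \<in> {a,b,c,d} \<Longrightarrow> v \<in> {a,b,c,d} \<Longrightarrow> u \<noteq> v \<Longrightarrow> E u v"
    and dis: "distinct [a,b,c,d]"
  shows "KS (f a) (f b) (f c) (f d)"
proof -
  from T have t2: "\<And>u v. E u v \<Longrightarrow> f u \<noteq> f v"
    and t3: "\<And>u v w. E u v \<Longrightarrow> E u w \<Longrightarrow> v \<noteq> w \<Longrightarrow> \<bar>f u - f v\<bar> \<noteq> \<bar>f u - f w\<bar>"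
    and t4: "\<And>u v. E u v \<Longrightarrow> \<bar>f u - f v\<bar> \<noteq> f u \<and> \<bar>f u - f v\<bar> \<noteq> f v"
    unfolding is_TDL_def by blast+
  have d: "distinct [f a, f b, f c, f d]" using t2 cl dis by auto
  have h1: "\<bar>x-y\<bar> \<noteq> x \<and> \<bar>x-y\<bar> \<noteq> y"
    if x: "x \<in> {f a, f b, f c, f d}" and y: "y \<in> {f a, f b, f c, f d}" and xy: "x \<noteq> y" for x y
  proof -
    obtain u where u: "u \<in> {a,b,c,d}" "x = f u" using x by auto
    obtain v where v: "v \<in> {a,b,c,d}" "y = f v" using y by auto
    have uv: "E u v" using cl u v xy by blast
    show ?thesis using t4[OF uv] u v by auto
  qed
  have h2: "\<bar>x-y\<bar> \<noteq> \<bar>x-z\<bar>"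
    if x: "x \<in> {f a, f b, f c, f d}" and y: "y \<in> {f a, f b, f c, f d}" and xy: "x \<noteq> y"
      and z: "z \<in> {f a, f b, f c, f d}" and zz: "z \<noteq> x" "z \<noteq> y" for x y z
  proof -
    obtain u where u: "u \<in> {a,b,c,d}" "x = f u" using x by auto
    obtain v where v: "v \<in> {a,b,c,d}" "y = f v" using y by auto
    obtain w where w: "w \<in> {a,b,c,d}" "z = f w" using z by auto
    have uv: "E u v" using cl u v xy by blast
    have uw: "E u w" using cl u w zz by blast
    have "v \<noteq> w" using v w zz by blast
    then show ?thesis using t3[OF uv uw] u v w by simp
  qed
  show ?thesis unfolding KS_def
    apply (intro conjI d ballI impI)
    using h1 h2 by blast+
qed

lemma I_sym: "I_E x y \<Longrightarrow> I_E y x" unfolding I_E_def by auto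
lemma I_irr: "\<not> I_E x x" unfolding I_E_def by auto
lemma I_bound: "I_E u v \<Longrightarrow> u < 8 \<and> v < 8" unfolding I_E_def by auto

lemma simple: "simple_graph I_V I_E"
  unfolding simple_graph_def I_V_def using I_sym I_irr I_bound by fastforce

definition f8 :: "nat \<Rightarrow> int" where "f8 v = [3,2,7,8,1,5,6,8] ! v"

lemma f8_vals: "f8 0 = 3" "f8 1 = 2" "f8 2 = 7" "f8 3 = 8" "f8 4 = 1" "f8 5 = 5" "f8 6 = 6" "f8 7 = 8"
  by (simp_all add: f8_def numeral_eq_Suc)

lemma f8_1: "f8 (Suc 0) = 2" by (simp add: f8_def)

lemma nat8: "(u::nat) < 8 \<Longrightarrow> u=0 \<or> u=1 \<or> u=2 \<or> u=3 \<or> u=4 \<or> u=5 \<or> u=6 \<or> u=7" by arith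

lemma I_E_list: "I_E u v \<Longrightarrow> (u=0 \<or> u=1 \<or> u=2 \<or> u=3 \<or> u=4 \<or> u=5 \<or> u=6 \<or> u=7) \<and> (v=0 \<or> v=1 \<or> v=2 \<or> v=3 \<or> v=4 \<or> v=5 \<or> v=6 \<or> v=7)"
  using I_bound nat8 by blast

lemma f8_ok: "is_TDL I_V I_E 8 f8"
  unfolding is_TDL_def
proof (intro conjI allI impI ballI)
  fix v assume "v \<in> I_V" then have "v < 8" by (auto simp: I_V_def)
  then show "1 \<le> f8 v" "f8 v \<le> int 8" using nat8[of v] by (auto simp: f8_vals f8_1)
next
  fix u v assume uv: "I_E u v" then show "f8 u \<noteq> f8 v"
    using I_E_list[OF uv] by (elim conjE disjE; simp add: f8_vals f8_1 I_E_def)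
next
  fix u v w assume h: "I_E u v \<and> I_E u w \<and> v \<noteq> w"
  have l: "(u=0 \<or> u=1 \<or> u=2 \<or> u=3 \<or> u=4 \<or> u=5 \<or> u=6 \<or> u=7) \<and> (v=0 \<or> v=1 \<or> v=2 \<or> v=3 \<or> v=4 \<or> v=5 \<or> v=6 \<or> v=7) \<and> (w=0 \<or> w=1 \<or> w=2 \<or> w=3 \<or> w=4 \<or> w=5 \<or> w=6 \<or> w=7)"
    using I_E_list[of u v] I_E_list[of u w] h by blast
  show "\<bar>f8 u - f8 v\<bar> \<noteq> \<bar>f8 u - f8 w\<bar>"
    using l h by (elim conjE disjE; simp add: f8_vals f8_1 I_E_def)
next
  fix u v assume uv: "I_E u v" then show "\<bar>f8 u - f8 v\<bar> \<noteq> f8 u" "\<bar>f8 u - f8 v\<bar> \<noteq> f8 v"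
    using I_E_list[OF uv] by (elim conjE disjE; simp add: f8_vals f8_1 I_E_def)+
qed

lemma KS_first: "is_TDL I_V I_E k f \<Longrightarrow> KS (f 0) (f 1) (f 2) (f 3)"
  by (rule TDL_KS[where E=I_E]) (auto simp: I_E_def)
lemma KS_second: "is_TDL I_V I_E k f \<Longrightarrow> KS (f 4) (f 5) (f 6) (f 7)"
  by (rule TDL_KS[where E=I_E]) (auto simp: I_E_def)

lemma range8: assumes "is_TDL I_V I_E k f" "k \<le> 8" "v \<le> 7" shows "f v \<in> {1..8}"
proof -
  have "v \<in> I_V" using assms(3) by (simp add: I_V_def)
  then have "1 \<le> f v \<and> f v \<le> int k" using assms(1) unfolding is_TDL_def by blast
  then show ?thesis using assms(2) by auto
qed

lemma has8_first: "is_TDL I_V I_E k f \<Longrightarrow> k \<le> 8 \<Longrightarrow> \<exists>i\<in>{0,1,2,3}. f i = 8"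
  using KS_8[OF KS_first] range8[of k f] by fastforce

lemma has8_second: "is_TDL I_V I_E k f \<Longrightarrow> k \<le> 8 \<Longrightarrow> \<exists>i\<in>{4,5,6,7}. f i = 8"
  using KS_8[OF KS_second] range8[of k f] by fastforce

lemma chi8: "chi_td I_V I_E = 8"
  unfolding chi_td_def
proof (rule Least_equality)
  show "(8::nat) > 0 \<and> (\<exists>f. is_TDL I_V I_E 8 f)" using f8_ok by auto
next
  fix k assume "k > 0 \<and> (\<exists>f. is_TDL I_V I_E k f)"
  then obtain f where T: "is_TDL I_V I_E k f" by blast
  show "8 \<le> k"
  proof (rule ccontr)
    assume "\<not> 8 \<le> k"
    then have k7: "k \<le> 7" by simp
    obtain i where i: "i \<in> {0,1,2,3}" "f i = 8" using has8_first[OF T] k7 by auto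
    have "i \<in> I_V" using i by (auto simp: I_V_def)
    then have "f i \<le> int k" using T unfolding is_TDL_def by blast
    then show False using i k7 by simp
  qed
qed

lemma reach0: assumes "u \<in> I_V" shows "I_E\<^sup>*\<^sup>* u 0 \<and> I_E\<^sup>*\<^sup>* 0 u"
proof -
  have u: "u=0 \<or> u=1 \<or> u=2 \<or> u=3 \<or> u=4 \<or> u=5 \<or> u=6 \<or> u=7" using assms nat8[of u] by (auto simp: I_V_def)
  have e40: "I_E 4 0" "I_E 0 4" by (auto simp: I_E_def)
  show ?thesis
  proof (cases "u \<le> 4")
    case True
    then have "u = 0 \<or> I_E u 0" using u by (auto simp: I_E_def)
    then show ?thesis using I_sym by (metis r_into_rtranclp rtranclp.rtrancl_refl)
  next
    case False
    then have a: "I_E u 4" "I_E 4 u" using u by (auto simp: I_E_def)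
    show ?thesis using a e40 by (meson converse_rtranclp_into_rtranclp r_into_rtranclp)
  qed
qed

lemma conn: "graph_connected I_V I_E"
  unfolding graph_connected_def
proof (intro conjI ballI)
  show "I_V \<noteq> {}" by (auto simp: I_V_def)
next
  fix u v assume "u \<in> I_V" "v \<in> I_V"
  then show "I_E\<^sup>*\<^sup>* u v" using reach0 by (meson rtranclp_trans)
qed

lemma cardV: "card I_V = 8" by (simp add: I_V_def)

lemma not_sat: "\<not> saturable I_V I_E"
proof
  assume "saturable I_V I_E"
  then obtain f where T: "is_TDL I_V I_E 8 f" and img: "f ` I_V = {1..8}"
    unfolding saturable_def saturated_TDL_def chi8 by auto
  have "card (f ` I_V) = card I_V" using img cardV by simp
  then have inj: "inj_on f I_V" by (rule eq_card_imp_inj_on[rotated]) (simp add: I_V_def)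
  obtain i where i: "i \<in> {0,1,2,3}" "f i = 8" using has8_first[OF T] by auto
  obtain j where j: "j \<in> {4,5,6,7}" "f j = 8" using has8_second[OF T] by auto
  have "i \<in> I_V" "j \<in> I_V" using i j by (auto simp: I_V_def)
  then have "i = j" using inj i j by (metis inj_onD)
  then show False using i j by auto
qed

theorem mainTheorem13:
  shows "simple_graph I_V I_E \<and> chi_td I_V I_E = 8 \<and> graph_connected I_V I_E
         \<and> card I_V = 8 \<and> card I_V = chi_td I_V I_E \<and> \<not> saturable I_V I_E"
  using simple chi8 conn cardV not_sat by simp

end
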